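(* Let $d\ge 2$ be an integer and let $SS_d=(S(a_i))_{i\ge1}$ be a degree-system with basis $d$, i.e. a system of grids whose modules are $a_i=d^{k_i}$ with integers $1\le k_1\le k_2\le\cdots$. Let $n\ge1$, $q\ge0$ be integers and put $\alpha=\sum_{i=1}^n 1/a_i$, the density of zeroes of an $n$-filling of the first $n$ grids, and assume $0<\alpha<1$. Then the maximum series with $q$ units satisfies $$msr_n(q)\;<\;\frac{n+q}{1-\alpha}+1,$$ and this estimate is unimprovable.
   Context: A grid $S(a)$ of module $a\in\mathbb N$, $a\ge1$, with shift $k\in\mathbb Z$ is the two-sided sequence $(l_j)_{j\in\mathbb Z}$ of elements of $\{0,1\}$ with $l_j=0$ iff $j\equiv k\pmod a$. The product of grids is their elementwise logical AND. An $n$-filling with modules $a_1,\dots,a_n$ is a product of grids $S(a_1),\dots,S(a_n)$ (with arbitrary shifts) such that omitting any one of the grids changes the product. A system of grids is an infinite sequence of grids with nondecreasing modules $a_1\le a_2\le\cdots$ such that for every $n$ the first $n$ grids form an $n$-filling. In a $0/1$ sequence, a $q$-series is a segment between positions $i<k$ with $l_i=l_k=1$ and exactly $q$ indices $j$ with $i<j<k$ and $l_j=1$; its length is $k-i$. The maximum series $msr_n(q)$ is the supremum, over all $n$-fillings with modules $a_1,\dots,a_n$ (all choices of shifts), of the largest length of a $q$-series in the filling. *)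

theory Defs
  imports Complex_Main "HOL-Library.Extended_Real"
begin

text \<open>0/1 sequences indexed by the integers are modelled as predicates
  \<open>int \<Rightarrow> bool\<close> (True = 1, False = 0).\<close>

definition grid :: "nat \<Rightarrow> int \<Rightarrow> int \<Rightarrow> bool" where
  "grid a k j \<longleftrightarrow> (j - k) mod int a \<noteq> 0"

definition grid_prod :: "nat set \<Rightarrow> (nat \<Rightarrow> nat) \<Rightarrow> (nat \<Rightarrow> int) \<Rightarrow> int \<Rightarrow> bool" where
  "grid_prod I a s j \<longleftrightarrow> (\<forall>i\<in>I. grid (a i) (s i) j)"

definition is_filling :: "nat \<Rightarrow> (nat \<Rightarrow> nat) \<Rightarrow> (nat \<Rightarrow> int) \<Rightarrow> bool" where
  "is_filling n a s \<longleftrightarrow> (\<forall>i\<in>{1..n}. a i \<ge> 1) \<and>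
     (\<forall>i\<in>{1..n}. grid_prod ({1..n} - {i}) a s \<noteq> grid_prod {1..n} a s)"

definition grid_system :: "(nat \<Rightarrow> nat) \<Rightarrow> (nat \<Rightarrow> int) \<Rightarrow> bool" where
  "grid_system a s \<longleftrightarrow> (\<forall>i\<ge>1. 1 \<le> a i \<and> a i \<le> a (Suc i)) \<and> (\<forall>n. is_filling n a s)"

definition degree_system :: "nat \<Rightarrow> (nat \<Rightarrow> nat) \<Rightarrow> (nat \<Rightarrow> int) \<Rightarrow> bool" where
  "degree_system d a s \<longleftrightarrow> grid_system a s \<and>
     (\<exists>k :: nat \<Rightarrow> nat. \<forall>i\<ge>1. a i = d ^ k i \<and> 1 \<le> k i \<and> k i \<le> k (Suc i))"

definition q_series :: "(int \<Rightarrow> bool) \<Rightarrow> nat \<Rightarrow> int \<Rightarrow> int \<Rightarrow> bool" where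
  "q_series l q i k \<longleftrightarrow> i < k \<and> l i \<and> l k \<and> card {j. i < j \<and> j < k \<and> l j} = q"

definition msr :: "nat \<Rightarrow> (nat \<Rightarrow> nat) \<Rightarrow> nat \<Rightarrow> ereal" where
  "msr n a q = Sup {ereal (real_of_int (k - i)) | s i k.
       is_filling n a s \<and> q_series (grid_prod {1..n} a s) q i k}"

end

theory Submission
  imports Defs
begin


lemma count_cls:
  fixes i k s :: int and a :: nat
  assumes a: "a \<ge> 1" and ik: "i < k"
  shows "real (card {j::int. i < j \<and> j < k \<and> (j - s) mod int a = 0}) \<le> real_of_int (k - i - 2) / real a + 1"
proof -
  define S where "S = {j::int. i < j \<and> j < k \<and> (j - s) mod int a = 0}"
  define f where "f j = (j - s) div int a" for j
  define lo where "lo = (i - s) div int a + 1"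
  define hi where "hi = (k - 1 - s) div int a"
  have ap: "int a > 0" using a by simp
  have inj: "inj_on f S"
  proof (rule inj_onI)
    fix x y assume "x \<in> S" "y \<in> S" "f x = f y"
    then have "(x - s) mod int a = 0" "(y - s) mod int a = 0" by (auto simp: S_def)
    then have "x - s = int a * f x" "y - s = int a * f y" unfolding f_def
      by (metis add.right_neutral mult_div_mod_eq)+
    then show "x = y" using \<open>f x = f y\<close> by simp
  qed
  have sub: "f ` S \<subseteq> {lo..hi}"
  proof
    fix y assume "y \<in> f ` S"
    then obtain x where x: "x \<in> S" "y = f x" by auto
    then have m: "(x - s) mod int a = 0" and ix: "i < x" and xk: "x < k" by (auto simp: S_def)
    have e: "x - s = int a * y" using m x(2) unfolding f_def by (metis add.right_neutral mult_div_mod_eq)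
    have "int a * ((i - s) div int a) \<le> i - s" by (metis ap mult_div_mod_eq le_add_same_cancel1 pos_mod_sign)
    then have "int a * ((i - s) div int a) < int a * y" using e ix by linarith
    then have "(i - s) div int a < y" using ap by (simp add: mult_less_cancel_left)
    then have 1: "lo \<le> y" unfolding lo_def by simp
    have "y = (x - s) div int a" using x(2) f_def by simp
    moreover have "(x - s) div int a \<le> (k - 1 - s) div int a" using xk ap by (intro zdiv_mono1) auto
    ultimately have "y \<le> hi" unfolding hi_def by simp
    with 1 show "y \<in> {lo..hi}" by simp
  qed
  have "card S = card (f ` S)" using inj by (simp add: card_image)
  also have "\<dots> \<le> card {lo..hi}" using sub by (intro card_mono) auto
  finally have c: "card S \<le> nat (hi - lo + 1)" by simp
  have h1: "int a * hi \<le> k - 1 - s" unfolding hi_def by (metis ap mult_div_mod_eq le_add_same_cancel1 pos_mod_sign)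
  have h2: "int a * ((i - s) div int a) > i - s - int a"
    using pos_mod_bound[OF ap, of "i - s"] mult_div_mod_eq[of "int a" "i - s"] by linarith
  have h3: "int a * (hi - lo) \<le> k - i - 2"
    using h1 h2 unfolding lo_def by (simp add: algebra_simps)
  show ?thesis
  proof (cases "hi < lo")
    case True
    then have "card S = 0" using c by simp
    moreover have "real_of_int (k - i - 2) / real a + 1 \<ge> 0"
    proof -
      have "real_of_int (k - i - 2) \<ge> - real a" using ik a by simp
      then have "real_of_int (k - i - 2) / real a \<ge> -1" using a by (simp add: field_simps)
      then show ?thesis by simp
    qed
    ultimately show ?thesis unfolding S_def by simp
  next
    case False
    have "real_of_int (int a * (hi - lo)) \<le> real_of_int (k - i - 2)" using h3 by linarith
    then have "real a * real_of_int (hi - lo) \<le> real_of_int (k - i - 2)" by simp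
    then have "real_of_int (hi - lo) \<le> real_of_int (k - i - 2) / real a" using a by (simp add: field_simps)
    moreover have "real (card S) \<le> real_of_int (hi - lo) + 1" using c False by linarith
    ultimately show ?thesis unfolding S_def by linarith
  qed
qed


lemma series_bound:
  assumes fill: "is_filling n a s" and qs: "q_series (grid_prod {1..n} a s) q i k"
  shows "real_of_int (k - i) - 1 - real q \<le> (\<Sum>t=1..n. 1 / real (a t)) * real_of_int (k - i - 2) + real n"
proof -
  let ?g = "grid_prod {1..n} a s"
  have ik: "i < k" and cq: "card {j. i < j \<and> j < k \<and> ?g j} = q" using qs by (auto simp: q_series_def)
  have a1: "\<And>t. t \<in> {1..n} \<Longrightarrow> a t \<ge> 1" using fill by (auto simp: is_filling_def)
  define S where "S t = {j::int. i < j \<and> j < k \<and> (j - s t) mod int (a t) = 0}" for t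
  define Z where "Z = {j. i < j \<and> j < k \<and> \<not> ?g j}"
  have I: "{i<..<k} = {j. i < j \<and> j < k \<and> ?g j} \<union> Z" by (auto simp: Z_def)
  have fin: "finite {j. i < j \<and> j < k \<and> ?g j}" "finite Z"
    by (rule finite_subset[of _ "{i<..<k}"], auto simp: Z_def)+
  have "card {i<..<k} = q + card Z" using I fin cq by (subst I, subst card_Un_disjoint) (auto simp: Z_def)
  then have cZ: "real_of_int (k - i) - 1 - real q = real (card Z)" using ik by simp
  have "Z \<subseteq> (\<Union>t\<in>{1..n}. S t)" by (auto simp: Z_def S_def grid_prod_def grid_def)
  then have "card Z \<le> card (\<Union>t\<in>{1..n}. S t)"
    by (intro card_mono) (auto simp: S_def intro!: finite_subset[of _ "{i<..<k}"])
  also have "\<dots> \<le> (\<Sum>t=1..n. card (S t))" by (rule card_UN_le) simp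
  finally have "real (card Z) \<le> (\<Sum>t=1..n. real (card (S t)))" by (metis of_nat_le_iff of_nat_sum)
  also have "\<dots> \<le> (\<Sum>t=1..n. real_of_int (k - i - 2) / real (a t) + 1)"
    by (intro sum_mono, unfold S_def, rule count_cls[OF a1 ik]) auto
  also have "\<dots> = (\<Sum>t=1..n. 1 / real (a t)) * real_of_int (k - i - 2) + real n"
    by (simp add: sum.distrib sum_distrib_right)
  finally show ?thesis using cZ by simp
qed

lemma part1:
  assumes a0: "0 < (\<Sum>i=1..n. 1 / real (a i))" and a1: "(\<Sum>i=1..n. 1 / real (a i)) < 1"
  shows "msr n a q < ereal ((real n + real q) / (1 - (\<Sum>i=1..n. 1 / real (a i))) + 1)"
proof -
  define \<alpha> where "\<alpha> = (\<Sum>i=1..n. 1 / real (a i))"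
  have p0: "0 < \<alpha>" "\<alpha> < 1" using a0 a1 by (auto simp: \<alpha>_def)
  define B where "B = (real n + real q + 1 - 2 * \<alpha>) / (1 - \<alpha>)"
  have le: "x \<le> ereal B" if xm: "x \<in> {ereal (real_of_int (k - i)) | s i k.
       is_filling n a s \<and> q_series (grid_prod {1..n} a s) q i k}" for x
  proof -
    obtain s i k where x: "x = ereal (real_of_int (k - i))" and f: "is_filling n a s"
      and qs: "q_series (grid_prod {1..n} a s) q i k" using xm by blast
    have h: "real_of_int (k - i) - 1 - real q \<le> \<alpha> * (real_of_int (k - i) - 2) + real n"
      using series_bound[OF f qs] unfolding \<alpha>_def by simp
    have "real_of_int (k - i) * (1 - \<alpha>) \<le> real n + real q + 1 - 2 * \<alpha>" using h by (simp add: algebra_simps)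
    then have "real_of_int (k - i) \<le> B" unfolding B_def using p0 by (simp add: field_simps)
    then show ?thesis using x by simp
  qed
  have "msr n a q \<le> ereal B" unfolding msr_def by (rule Sup_least) (rule le)
  also have "B < (real n + real q) / (1 - \<alpha>) + 1"
  proof -
    have ne: "1 - \<alpha> > 0" using p0 by simp
    have e1: "B * (1 - \<alpha>) = real n + real q + 1 - 2 * \<alpha>" unfolding B_def using ne by simp
    have e2: "((real n + real q) / (1 - \<alpha>) + 1) * (1 - \<alpha>) = real n + real q + 1 - \<alpha>"
    proof -
      have "(real n + real q) / (1 - \<alpha>) * (1 - \<alpha>) = real n + real q" using ne by (simp add: field_simps)
      then show ?thesis by (simp add: distrib_right del: times_divide_eq_left)
    qed
    have "B * (1 - \<alpha>) < ((real n + real q) / (1 - \<alpha>) + 1) * (1 - \<alpha>)" using e1 e2 p0 by linarith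
    then show ?thesis using ne by (simp add: mult_less_cancel_right)
  qed
  finally show ?thesis unfolding \<alpha>_def by simp
qed


lemma not_dvd_small:
  fixes x a :: int assumes "0 < \<bar>x\<bar>" "\<bar>x\<bar> < a" shows "x mod a \<noteq> 0"
proof
  assume "x mod a = 0"
  then have "a dvd x" by (simp add: dvd_eq_mod_eq_0)
  then have "a dvd \<bar>x\<bar>" by simp
  then have "a \<le> \<bar>x\<bar>" using assms by (intro zdvd_imp_le) auto
  then show False using assms by simp
qed

lemma constr:
  fixes d n K :: nat
  assumes d: "d \<ge> 2" and nK: "n < d ^ K"
  defines "a \<equiv> \<lambda>i. d ^ (K + i)"
  defines "s \<equiv> \<lambda>i. if i \<le> n then int i else int (d ^ (K + i - 1))"
  shows "\<And>i t. 1 \<le> i \<Longrightarrow> 1 \<le> t \<Longrightarrow> i \<noteq> t \<Longrightarrow> (s t - s i) mod int (a i) \<noteq> 0"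
proof -
  fix i t :: nat assume i1: "1 \<le> i" and t1: "1 \<le> t" and it: "i \<noteq> t"
  have d1: "d > 1" using d by simp
  have pos: "\<And>j. 1 \<le> j \<Longrightarrow> 0 < s j" unfolding s_def using d by auto
  have DK: "d ^ K \<le> d ^ (K + j - 1)" if "j \<ge> 1" for j using that d by (intro power_increasing) auto
  have lt: "\<And>j. 1 \<le> j \<Longrightarrow> s j < int (a j)"
  proof -
    fix j :: nat assume j: "1 \<le> j"
    have "d ^ K \<le> d ^ (K + j)" using d by (intro power_increasing) auto
    moreover have "d ^ (K + j - 1) < d ^ (K + j)" using d1 j by (intro power_strict_increasing) auto
    ultimately show "s j < int (a j)" unfolding s_def a_def using nK j by (auto simp del: of_nat_power)
  qed
  show "(s t - s i) mod int (a i) \<noteq> 0"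
  proof (cases "n < t \<and> i < t")
    case True
    have "d ^ (K + i) dvd d ^ (K + t - 1)" using True by (intro le_imp_power_dvd) auto
    moreover have "s t = int (d ^ (K + t - 1))" using True by (simp add: s_def del: of_nat_power)
    ultimately have dv: "int (a i) dvd s t" unfolding a_def by (simp only: of_nat_dvd_iff)
    show ?thesis
    proof
      assume "(s t - s i) mod int (a i) = 0"
      then have "int (a i) dvd s t - s i" by (simp add: dvd_eq_mod_eq_0)
      with dv have "int (a i) dvd s t - (s t - s i)" by (rule dvd_diff)
      then have "int (a i) dvd s i" by simp
      then have "int (a i) \<le> s i" using pos[OF i1] by (intro zdvd_imp_le) auto
      then show False using lt[OF i1] by simp
    qed
  next
    case False
    have stlt: "s t < int (a i)"
    proof (cases "t \<le> n")
      case True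
      have "d ^ K \<le> d ^ (K + i)" using d by (intro power_increasing) auto
      then show ?thesis using True nK unfolding s_def a_def by (auto simp del: of_nat_power)
    next
      case tn: False
      then have "t < i" using False it by auto
      then have "d ^ (K + t - 1) < d ^ (K + i)" using d1 by (intro power_strict_increasing) auto
      then show ?thesis using tn unfolding s_def a_def by (auto simp del: of_nat_power)
    qed
    have ne: "s t \<noteq> s i"
    proof
      assume eq: "s t = s i"
      show False
      proof (cases "t \<le> n"; cases "i \<le> n")
        assume "t \<le> n" "i \<le> n" then show False using eq it unfolding s_def by auto
      next
        assume "t \<le> n" "\<not> i \<le> n"
        then have "s t < int (d ^ K)" "int (d ^ K) \<le> s i" using nK DK[OF i1] unfolding s_def by (auto simp del: of_nat_power)
        then show False using eq by simp
      next
        assume "\<not> t \<le> n" "i \<le> n"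
        then have "s i < int (d ^ K)" "int (d ^ K) \<le> s t" using nK DK[OF t1] unfolding s_def by (auto simp del: of_nat_power)
        then show False using eq by simp
      next
        assume "\<not> t \<le> n" "\<not> i \<le> n"
        then have "d ^ (K + t - 1) = d ^ (K + i - 1)" using eq unfolding s_def by (simp del: of_nat_power)
        then have "K + t - 1 = K + i - 1" using d1 by (simp add: power_inject_exp)
        then show False using it i1 t1 by simp
      qed
    qed
    have "0 < \<bar>s t - s i\<bar>" using ne by simp
    moreover have "\<bar>s t - s i\<bar> < int (a i)" using pos[OF i1] pos[OF t1] stlt lt[OF i1] by (simp add: abs_less_iff)
    ultimately show ?thesis by (rule not_dvd_small)
  qed
qed


lemma arith_part:
  fixes A n D \<alpha> \<epsilon> :: real
  assumes A: "A \<ge> 0" and n: "n \<ge> 0" and e: "\<epsilon> > 0" and a0: "0 \<le> \<alpha>" and al: "\<alpha> \<le> n / D"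
    and D: "D > 2 * A * n / \<epsilon> + 2 * n" and Dp: "D > 0"
  shows "\<alpha> < 1" "A / (1 - \<alpha>) + 1 - \<epsilon> < A + 1"
proof -
  have "0 \<le> 2 * A * n" using A n by simp
  then have "0 \<le> 2 * A * n / \<epsilon>" using e by simp
  then have "2 * n < D" using D by linarith
  then have "n < 1/2 * D" by simp
  then have "n / D < 1/2" using Dp by (simp add: pos_divide_less_eq)
  then have ah: "\<alpha> < 1/2" using al by linarith
  then show "\<alpha> < 1" by simp
  have "0 \<le> \<alpha> * (1 - 2 * \<alpha>)" using ah a0 by simp
  moreover have "(1 + 2 * \<alpha>) * (1 - \<alpha>) = 1 + \<alpha> * (1 - 2 * \<alpha>)" by (simp add: algebra_simps)
  ultimately have "1 \<le> (1 + 2 * \<alpha>) * (1 - \<alpha>)" by linarith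
  then have "1 / (1 - \<alpha>) \<le> 1 + 2 * \<alpha>" using ah by (simp add: pos_divide_le_eq)
  then have "A * (1 / (1 - \<alpha>)) \<le> A * (1 + 2 * \<alpha>)" using A by (rule mult_left_mono)
  then have h1: "A / (1 - \<alpha>) \<le> A + 2 * A * \<alpha>" by (simp add: algebra_simps)
  have "2 * A * \<alpha> \<le> 2 * A * (n / D)" using A al by (intro mult_left_mono) simp_all
  also have "2 * A * (n / D) < \<epsilon>"
  proof -
    have "2 * A * n / \<epsilon> < D" using D n by linarith
    then have "2 * A * n < D * \<epsilon>" using e by (simp add: pos_divide_less_eq)
    then have "2 * A * n / D < \<epsilon>" using Dp by (simp add: pos_divide_less_eq mult.commute)
    then show ?thesis by simp
  qed
  finally show "A / (1 - \<alpha>) + 1 - \<epsilon> < A + 1" using h1 by linarith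
qed


lemma part2:
  fixes d n q :: nat and \<epsilon> :: real
  assumes d: "d \<ge> 2" and n1: "n \<ge> 1" and e: "\<epsilon> > 0"
  shows "\<exists>a s. degree_system d a s \<and> (\<Sum>i=1..n. 1 / real (a i)) < 1 \<and>
               msr n a q > ereal ((real n + real q) / (1 - (\<Sum>i=1..n. 1 / real (a i))) + 1 - \<epsilon>)"
proof -
  define M where "M = 2 * (real n + real q) * real n / \<epsilon> + 2 * real n + real q + 2"
  obtain K :: nat where K: "M < real K" using reals_Archimedean2 by blast
  have "K < 2 ^ K" by (rule less_exp)
  also have "(2::nat) ^ K \<le> d ^ K" using d by (intro power_mono) auto
  finally have KD: "K < d ^ K" .
  define D where "D = d ^ K"
  have DM: "M < real D" using K KD unfolding D_def by linarith
  have Dq: "n + q + 1 < D"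
  proof -
    have "0 \<le> 2 * (real n + real q) * real n / \<epsilon>" using e by simp
    then show ?thesis using DM unfolding M_def by linarith
  qed
  define a where "a = (\<lambda>i. d ^ (K + i))"
  define s where "s = (\<lambda>i. if i \<le> n then int i else int (d ^ (K + i - 1)))"
  have nK: "n < d ^ K" using Dq D_def by simp
  have sep: "\<And>i t. 1 \<le> i \<Longrightarrow> 1 \<le> t \<Longrightarrow> i \<noteq> t \<Longrightarrow> (s t - s i) mod int (a i) \<noteq> 0"
    unfolding a_def s_def by (rule constr[OF d nK])
  have a1: "\<And>i. 1 \<le> a i" unfolding a_def using d by simp
  have aD: "\<And>i. D \<le> a i" unfolding a_def D_def using d by (intro power_increasing) auto
  have fill: "is_filling m a s" for m
    unfolding is_filling_def
  proof (intro conjI ballI)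
    fix i assume "i \<in> {1..m}" show "1 \<le> a i" by (rule a1)
  next
    fix i assume i: "i \<in> {1..m}"
    have "grid_prod ({1..m} - {i}) a s (s i)"
      unfolding grid_prod_def grid_def using sep i by auto
    moreover have "\<not> grid_prod {1..m} a s (s i)"
      unfolding grid_prod_def grid_def using i by (auto intro!: bexI[of _ i])
    ultimately show "grid_prod ({1..m} - {i}) a s \<noteq> grid_prod {1..m} a s" by metis
  qed
  have deg: "degree_system d a s"
    unfolding degree_system_def grid_system_def
  proof (intro conjI allI impI)
    fix i :: nat assume "1 \<le> i" show "1 \<le> a i" by (rule a1)
  next
    fix i :: nat assume "1 \<le> i" show "a i \<le> a (Suc i)" unfolding a_def using d by (intro power_increasing) auto
  next
    fix m show "is_filling m a s" by (rule fill)
  next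
    show "\<exists>k :: nat \<Rightarrow> nat. \<forall>i\<ge>1. a i = d ^ k i \<and> 1 \<le> k i \<and> k i \<le> k (Suc i)"
      by (rule exI[of _ "\<lambda>i. K + i"]) (auto simp: a_def)
  qed
  let ?g = "grid_prod {1..n} a s"
  have gchar: "?g j \<longleftrightarrow> \<not> (1 \<le> j \<and> j \<le> int n)" if j: "0 \<le> j" "j \<le> int n + int q + 1" for j
  proof -
    have "(j - s t) mod int (a t) = 0 \<longleftrightarrow> j = int t" if t: "t \<in> {1..n}" for t
    proof -
      have st: "s t = int t" using t unfolding s_def by simp
      show ?thesis
      proof
        assume m: "(j - s t) mod int (a t) = 0"
        show "j = int t"
        proof (rule ccontr)
          assume "j \<noteq> int t"
          then have "0 < \<bar>j - s t\<bar>" using st by simp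
          moreover have "\<bar>j - s t\<bar> < int (a t)"
          proof -
            have "int n + int q + 1 < int D" using Dq by linarith
            moreover have "int D \<le> int (a t)" using aD[of t] by linarith
            ultimately show ?thesis using st t j by (simp add: abs_less_iff)
          qed
          ultimately have "(j - s t) mod int (a t) \<noteq> 0" by (rule not_dvd_small)
          then show False using m by simp
        qed
      qed (simp add: st)
    qed
    then have "?g j \<longleftrightarrow> (\<forall>t\<in>{1..n}. j \<noteq> int t)" unfolding grid_prod_def grid_def by auto
    also have "\<dots> \<longleftrightarrow> \<not> (1 \<le> j \<and> j \<le> int n)"
    proof
      assume h: "\<forall>t\<in>{1..n}. j \<noteq> int t"
      show "\<not> (1 \<le> j \<and> j \<le> int n)"
      proof
        assume "1 \<le> j \<and> j \<le> int n"
        then have "nat j \<in> {1..n}" "j = int (nat j)" by auto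
        then show False using h by blast
      qed
    qed auto
    finally show ?thesis .
  qed
  have ones: "{j. 0 < j \<and> j < int n + int q + 1 \<and> ?g j} = {int n + 1 .. int n + int q}"
    using gchar by auto
  have qs: "q_series ?g q 0 (int n + int q + 1)"
    unfolding q_series_def using gchar ones by simp
  have mem: "ereal (real n + real q + 1) \<in> {ereal (real_of_int (k - i)) | s i k.
       is_filling n a s \<and> q_series (grid_prod {1..n} a s) q i k}"
    using fill qs by force
  have msr_ge: "ereal (real n + real q + 1) \<le> msr n a q" unfolding msr_def using mem by (rule Sup_upper)
  define \<alpha> where "\<alpha> = (\<Sum>i=1..n. 1 / real (a i))"
  have a0: "0 \<le> \<alpha>" unfolding \<alpha>_def by (intro sum_nonneg) simp
  have "\<alpha> \<le> (\<Sum>i=1..n. 1 / real D)" unfolding \<alpha>_def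
  proof (intro sum_mono)
    fix i assume "i \<in> {1..n}"
    have "real D \<le> real (a i)" using aD[of i] by simp
    moreover have "0 < real D" using Dq by simp
    ultimately show "1 / real (a i) \<le> 1 / real D" by (simp add: frac_le)
  qed
  then have al: "\<alpha> \<le> real n / real D" by simp
  have Dgt: "real D > 2 * (real n + real q) * real n / \<epsilon> + 2 * real n" using DM unfolding M_def by linarith
  have ar: "\<alpha> < 1" "(real n + real q) / (1 - \<alpha>) + 1 - \<epsilon> < (real n + real q) + 1"
    using arith_part[OF _ _ e a0 al Dgt] Dq by auto
  show ?thesis
  proof (intro exI conjI)
    show "degree_system d a s" by (rule deg)
    show "(\<Sum>i=1..n. 1 / real (a i)) < 1" using ar(1) unfolding \<alpha>_def .
    have "ereal ((real n + real q) / (1 - \<alpha>) + 1 - \<epsilon>) < ereal (real n + real q + 1)" using ar(2) by simp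
    also note msr_ge
    finally show "msr n a q > ereal ((real n + real q) / (1 - (\<Sum>i=1..n. 1 / real (a i))) + 1 - \<epsilon>)"
      unfolding \<alpha>_def .
  qed
qed


theorem theorem2:
  shows "(\<forall>(d::nat) a s (n::nat) (q::nat).
            d \<ge> 2 \<longrightarrow> degree_system d a s \<longrightarrow> n \<ge> 1 \<longrightarrow>
            0 < (\<Sum>i=1..n. 1 / real (a i)) \<longrightarrow> (\<Sum>i=1..n. 1 / real (a i)) < 1 \<longrightarrow>
            msr n a q < ereal ((real n + real q) / (1 - (\<Sum>i=1..n. 1 / real (a i))) + 1))
       \<and> (\<forall>(d::nat) (n::nat) (q::nat) (\<epsilon>::real).
            d \<ge> 2 \<longrightarrow> n \<ge> 1 \<longrightarrow> \<epsilon> > 0 \<longrightarrow>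
            (\<exists>a s. degree_system d a s \<and> (\<Sum>i=1..n. 1 / real (a i)) < 1 \<and>
               msr n a q > ereal ((real n + real q) / (1 - (\<Sum>i=1..n. 1 / real (a i))) + 1 - \<epsilon>)))"
  using part1 part2 by blast

end
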